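(* Let $V$ be a finite set, $C$ a partition of $V$, $k>0$, $G=(V,E)$ the clique graph of $C$ with edge weight $k$, and let $M\ge 0$ and $\beta>0$. Let $d$ be a cluster in some clustering of $G$ (so $d$ is a nonempty subset of $V$), and put $q(d)=\frac{w_d}{M+v_d/\beta}-\left(\frac{v_d}{M+v_d/\beta}\right)^2$. Then $$\frac{w_d}{v_d}-\beta-\frac{\beta M}{k}\;\le\;\frac{q(d)}{\beta}\;\le\;\frac{w_d}{v_d}-\beta+\frac{2\beta^2M}{k}.$$
   Context: The clique graph of a partition $C$ of $V$ with edge weight $k$ is $G=(V,E)$ with $E(i,j)=k$ if $i$ and $j$ lie in the same block of $C$ (including $i=j$) and $E(i,j)=0$ otherwise. For $d\subseteq V$: $v_d=\sum_{i\in d}\sum_{j\in V}E(i,j)$ and $w_d=\sum_{i,j\in d}E(i,j)$. The quantity $q(d)$ is the contribution of $d$ to the adaptive scale modularity with parameters $M$ and $\gamma=1/\beta$. *)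

theory Defs
  imports Complex_Main "HOL-Library.Disjoint_Sets"
begin

definition clique_weight :: "'a set set \<Rightarrow> real \<Rightarrow> 'a \<Rightarrow> 'a \<Rightarrow> real" where
  "clique_weight C k i j = (if \<exists>c\<in>C. i \<in> c \<and> j \<in> c then k else 0)"

definition vol :: "'a set \<Rightarrow> ('a \<Rightarrow> 'a \<Rightarrow> real) \<Rightarrow> 'a set \<Rightarrow> real" where
  "vol V E d = (\<Sum>i\<in>d. \<Sum>j\<in>V. E i j)"

definition wgt_in :: "('a \<Rightarrow> 'a \<Rightarrow> real) \<Rightarrow> 'a set \<Rightarrow> real" where
  "wgt_in E d = (\<Sum>i\<in>d. \<Sum>j\<in>d. E i j)"

text \<open>Contribution of cluster d to the adaptive scale modularity, gamma = 1/beta.\<close>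
definition qual :: "real \<Rightarrow> real \<Rightarrow> 'a set \<Rightarrow> ('a \<Rightarrow> 'a \<Rightarrow> real) \<Rightarrow> 'a set \<Rightarrow> real" where
  "qual M \<beta> V E d = wgt_in E d / (M + vol V E d / \<beta>) - (vol V E d / (M + vol V E d / \<beta>))^2"

end

theory Submission
  imports Defs
begin

lemma real_key:
  fixes v w k M \<beta> :: real
  assumes vk: "v \<ge> k" and k: "k > 0" and w0: "0 \<le> w" and wv: "w \<le> v" and M: "M \<ge> 0" and b: "\<beta> > 0"
  shows "w / v - \<beta> - \<beta> * M / k \<le> (w / (M + v / \<beta>) - (v / (M + v / \<beta>))^2) / \<beta>
       \<and> (w / (M + v / \<beta>) - (v / (M + v / \<beta>))^2) / \<beta> \<le> w / v - \<beta> + 2 * \<beta>^2 * M / k"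
proof -
  define a where "a = \<beta> * M"
  have a0: "a \<ge> 0" using M b by (simp add: a_def)
  have v0: "v > 0" using vk k by linarith
  have x0: "v + a > 0" using v0 a0 by linarith
  have D: "M + v / \<beta> = (v + a) / \<beta>" using b by (simp add: a_def field_simps)
  have e: "(w / (M + v / \<beta>) - (v / (M + v / \<beta>))^2) / \<beta> = w / (v + a) - \<beta> * v^2 / (v+a)^2"
  proof -
    have e1: "w / ((v + a) / \<beta>) / \<beta> = w / (v + a)" using b x0 by simp
    have e2: "(v / ((v + a) / \<beta>))^2 / \<beta> = \<beta> * v^2 / (v+a)^2"
    proof -
      have "(v / ((v + a) / \<beta>))^2 / \<beta> = (\<beta> * v)^2 / (v+a)^2 / \<beta>"
      proof -
        have "v / ((v + a) / \<beta>) = (\<beta> * v) / (v + a)" using b by (simp add: mult.commute)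
        thus ?thesis by (simp only: power_divide)
      qed
      also have "\<dots> = \<beta> * v^2 / (v+a)^2" using b by (simp add: power2_eq_square)
      finally show ?thesis .
    qed
    show ?thesis unfolding D diff_divide_distrib e1 e2 ..
  qed
  have l1: "w / (v + a) - w / v \<ge> - a / k"
  proof -
    have "w / (v + a) - w / v = - (w * a) / (v * (v + a))" using v0 x0 by (simp add: field_simps)
    moreover have "(w * a) / (v * (v + a)) \<le> a / k"
    proof -
      have "(w * a) / (v * (v + a)) \<le> (v * a) / (v * (v+a))"
        using wv a0 v0 x0 by (intro divide_right_mono mult_right_mono) auto
      also have "\<dots> = a / (v + a)" using v0 by simp
      also have "\<dots> \<le> a / k" using a0 k vk by (intro divide_left_mono) auto
      finally show ?thesis .
    qed
    ultimately show ?thesis by linarith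
  qed
  have l2: "\<beta> * v^2 / (v+a)^2 \<le> \<beta>"
  proof -
    have "v^2 \<le> (v+a)^2" using v0 a0 by (intro power_mono) auto
    hence "v^2 / (v+a)^2 \<le> 1" using x0 by simp
    hence "\<beta> * (v^2 / (v+a)^2) \<le> \<beta> * 1" using b by (intro mult_left_mono) auto
    thus ?thesis by simp
  qed
  have u1: "w / (v + a) \<le> w / v" using w0 v0 a0 by (intro divide_left_mono) auto
  have u2: "\<beta> - \<beta> * v^2 / (v+a)^2 \<le> 2 * \<beta> * a / k"
  proof -
    have "\<beta> - \<beta> * v^2 / (v+a)^2 = \<beta> * (2*a*v + a^2) / (v+a)^2"
    proof -
      have s: "(v+a)^2 > 0" using x0 by simp
      have "\<beta> = \<beta> * (v+a)^2 / (v+a)^2" using s by simp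
      hence "\<beta> - \<beta> * v^2 / (v+a)^2 = (\<beta> * (v+a)^2 - \<beta> * v^2) / (v+a)^2"
        by (metis diff_divide_distrib)
      also have "\<beta> * (v+a)^2 - \<beta> * v^2 = \<beta> * (2*a*v + a^2)" by (simp add: algebra_simps power2_eq_square)
      finally show ?thesis .
    qed
    also have "\<dots> \<le> \<beta> * (2*a*(v+a)) / (v+a)^2"
    proof -
      have h1: "2*a*v + a^2 \<le> 2*a*(v+a)" using a0 by (simp add: algebra_simps power2_eq_square)
      have h2: "0 \<le> (v+a)^2" by simp
      show ?thesis using h1 h2 b by (intro divide_right_mono mult_left_mono) auto
    qed
    also have "\<dots> = 2 * \<beta> * a / (v + a)" using x0 by (simp add: power2_eq_square)
    also have "\<dots> \<le> 2 * \<beta> * a / k" using a0 b k vk by (intro divide_left_mono) auto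
    finally show ?thesis .
  qed
  have "2 * \<beta> * a / k = 2 * \<beta>^2 * M / k" by (simp add: a_def power2_eq_square)
  moreover have "a / k = \<beta> * M / k" by (simp add: a_def)
  ultimately show ?thesis unfolding e using l1 l2 u1 u2 by linarith
qed

theorem lemma3:
  fixes V :: "'a set" and C :: "'a set set" and k M \<beta> :: real and d :: "'a set"
  assumes "finite V" and "partition_on V C" and "k > 0"
    and "M \<ge> 0" and "\<beta> > 0"
    and "d \<subseteq> V" and "d \<noteq> {}"
  shows "wgt_in (clique_weight C k) d / vol V (clique_weight C k) d - \<beta> - \<beta> * M / k
           \<le> qual M \<beta> V (clique_weight C k) d / \<beta>
       \<and> qual M \<beta> V (clique_weight C k) d / \<beta>
           \<le> wgt_in (clique_weight C k) d / vol V (clique_weight C k) d - \<beta> + 2 * \<beta>^2 * M / k"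
proof -
  let ?E = "clique_weight C k"
  have fd: "finite d" using assms(1,6) finite_subset by blast
  have E0: "\<And>i j. ?E i j \<ge> 0" using assms(3) by (simp add: clique_weight_def)
  have w0: "0 \<le> wgt_in ?E d" unfolding wgt_in_def using E0 by (intro sum_nonneg) auto
  have wv: "wgt_in ?E d \<le> vol V ?E d" unfolding wgt_in_def vol_def
    using assms(1,6) E0 by (intro sum_mono sum_mono2) auto
  obtain i where i: "i \<in> d" using assms(7) by blast
  have iV: "i \<in> V" using i assms(6) by blast
  then obtain c where "c \<in> C" "i \<in> c" using assms(2) unfolding partition_on_def by blast
  hence Eii: "?E i i = k" by (auto simp: clique_weight_def)
  have "k \<le> (\<Sum>j\<in>V. ?E i j)"
    using member_le_sum[of i V "?E i", OF iV] E0 assms(1) Eii by auto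
  also have "\<dots> \<le> vol V ?E d" unfolding vol_def
    using member_le_sum[of i d "\<lambda>i. \<Sum>j\<in>V. ?E i j", OF i] E0 fd by (simp add: sum_nonneg)
  finally have vk: "k \<le> vol V ?E d" .
  show ?thesis unfolding qual_def
    using real_key[OF vk assms(3) w0 wv assms(4,5)] by simp
qed

end
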